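(* For every $n\ge1$ and every optimal $n$-town $S$, $$w(S)>\frac{h(S)}{2}-3\qquad\text{and}\qquad h(S)>\frac{w(S)}{2}-3.$$
   Context: An $n$-town is a set $S\subset\mathbb{Z}\times\mathbb{Z}$ of exactly $n$ distinct grid points; its cost is $c(S)=\frac12\sum_{s\in S}\sum_{t\in S}\|s-t\|_1$ (Manhattan distance), and it is optimal if its cost is minimum among all $n$-towns. For $i\in\mathbb{Z}$, the $i$-th column of $S$ is $C_i=\{(i,y)\in S\}$ and the $i$-th row is $R_i=\{(x,i)\in S\}$. The width of $S$ is $w(S)=\max_{i\in\mathbb{Z}}|R_i|$ and the height is $h(S)=\max_{i\in\mathbb{Z}}|C_i|$. *)

theory Defs
  imports Main "HOL-Library.Extended_Real"
begin

type_synonym point = "int \<times> int"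

definition manhattan :: "point \<Rightarrow> point \<Rightarrow> int" where
  "manhattan s t = \<bar>fst s - fst t\<bar> + \<bar>snd s - snd t\<bar>"

definition is_town :: "nat \<Rightarrow> point set \<Rightarrow> bool" where
  "is_town n S \<longleftrightarrow> finite S \<and> card S = n"

definition cost :: "point set \<Rightarrow> real" where
  "cost S = (1/2) * (\<Sum>s\<in>S. \<Sum>t\<in>S. real_of_int (manhattan s t))"

definition optimal_town :: "nat \<Rightarrow> point set \<Rightarrow> bool" where
  "optimal_town n S \<longleftrightarrow> is_town n S \<and> (\<forall>T. is_town n T \<longrightarrow> cost S \<le> cost T)"

definition col :: "point set \<Rightarrow> int \<Rightarrow> point set" where
  "col S i = {p \<in> S. fst p = i}"

definition row :: "point set \<Rightarrow> int \<Rightarrow> point set" where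
  "row S i = {p \<in> S. snd p = i}"

definition width :: "point set \<Rightarrow> nat" where
  "width S = Max (range (\<lambda>i. card (row S i)))"

definition height :: "point set \<Rightarrow> nat" where
  "height S = Max (range (\<lambda>i. card (col S i)))"

end

theory Submission
  imports Defs
begin

definition D :: "point set \<Rightarrow> point \<Rightarrow> int" where
  "D S z = (\<Sum>t\<in>S. manhattan z t)"

lemma mh_sym: "manhattan s t = manhattan t s"
  unfolding manhattan_def by simp

lemma mh_self: "manhattan s s = 0"
  unfolding manhattan_def by simp

definition Q :: "point set \<Rightarrow> real" where
  "Q A = (\<Sum>s\<in>A. \<Sum>t\<in>A. real_of_int (manhattan s t))"

lemma Q_insert:
  assumes "finite A" "a \<notin> A"
  shows "Q (insert a A) = Q A + 2 * real_of_int (D A a)"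
proof -
  have "Q (insert a A) = (\<Sum>t\<in>insert a A. real_of_int (manhattan a t))
      + (\<Sum>s\<in>A. \<Sum>t\<in>insert a A. real_of_int (manhattan s t))"
    unfolding Q_def using assms by simp
  also have "\<dots> = (\<Sum>t\<in>A. real_of_int (manhattan a t))
      + (\<Sum>s\<in>A. real_of_int (manhattan s a) + (\<Sum>t\<in>A. real_of_int (manhattan s t)))"
    using assms by (simp add: mh_self)
  also have "\<dots> = (\<Sum>t\<in>A. real_of_int (manhattan a t)) + (\<Sum>s\<in>A. real_of_int (manhattan a s)) + Q A"
    unfolding Q_def by (simp add: sum.distrib mh_sym)
  finally show ?thesis unfolding D_def by (simp add: of_int_sum)
qed

lemma exch:
  assumes opt: "optimal_town n S" and p: "p \<in> S" and q: "q \<notin> S"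
  shows "D S p + manhattan p q \<le> D S q"
proof -
  have fin: "finite S" and cS: "card S = n" using opt unfolding optimal_town_def is_town_def by auto
  define R where "R = S - {p}"
  have fR: "finite R" using fin R_def by auto
  have qR: "q \<notin> R" using q R_def by auto
  have pR: "p \<notin> R" using R_def by auto
  have SR: "S = insert p R" using p R_def by auto
  have town: "is_town n (insert q R)"
    unfolding is_town_def using fR qR cS SR pR by (simp add: card_insert_if)
  hence "cost S \<le> cost (insert q R)" using opt unfolding optimal_town_def by auto
  hence "Q S \<le> Q (insert q R)" unfolding cost_def Q_def by simp
  hence "Q R + 2 * real_of_int (D R p) \<le> Q R + 2 * real_of_int (D R q)"
    using Q_insert[OF fR pR] Q_insert[OF fR qR] SR by simp
  hence 1: "D R p \<le> D R q" by simp
  have "D S p = D R p + manhattan p p" unfolding D_def SR using fR pR by simp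
  moreover have "D S q = D R q + manhattan q p" unfolding D_def SR using fR pR by simp
  ultimately show ?thesis using 1 by (simp add: mh_self mh_sym)
qed


lemma sum_ind: "finite A \<Longrightarrow> (\<Sum>t\<in>A. (if P t then (1::int) else 0)) = int (card {t\<in>A. P t})"
  by (simp add: sum.inter_filter[symmetric])

lemma cheb:
  fixes r :: "nat \<Rightarrow> nat"
  assumes mono: "\<And>i j. 1 \<le> i \<Longrightarrow> i \<le> j \<Longrightarrow> r j \<le> r i"
  shows "2 * (\<Sum>i=1..T. i * r i) \<le> (T+1) * (\<Sum>i=1..T. r i)"
proof (induction T)
  case 0 then show ?case by simp
next
  case (Suc T)
  have "T * r (Suc T) \<le> (\<Sum>i=1..T. r i)"
  proof -
    have "(\<Sum>i=1..T. r (Suc T)) \<le> (\<Sum>i=1..T. r i)"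
      by (rule sum_mono) (use mono in auto)
    thus ?thesis by simp
  qed
  thus ?case using Suc.IH by (simp add: algebra_simps)
qed

lemma discrete_ivt:
  fixes P :: "int \<Rightarrow> bool"
  shows "P (b + int k) \<Longrightarrow> \<not> P b \<Longrightarrow> \<exists>y. P y \<and> \<not> P (y - 1)"
proof (induction k)
  case 0 then show ?case by simp
next
  case (Suc k)
  show ?case
  proof (cases "P (b + int k)")
    case True then show ?thesis using Suc by blast
  next
    case False then show ?thesis using Suc.prems by (intro exI[of _ "b + (1 + int k)"]) auto
  qed
qed


lemma nest:
  assumes opt: "optimal_town n S" and kap: "int n \<le> 2 * int (card {t\<in>S. snd t \<le> \<kappa>})"
    and xy: "(x,y) \<in> S" and yk: "y > \<kappa>"
  shows "(x, y-1) \<in> S"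
proof (rule ccontr)
  assume nq: "(x, y-1) \<notin> S"
  have fin: "finite S" and cS: "card S = n" using opt unfolding optimal_town_def is_town_def by auto
  have e: "D S (x,y) + manhattan (x,y) (x,y-1) \<le> D S (x,y-1)" using exch[OF opt xy nq] .
  have m1: "manhattan (x,y) (x,y-1) = 1" unfolding manhattan_def by simp
  have "D S (x,y-1) - D S (x,y) = (\<Sum>t\<in>S. manhattan (x,y-1) t - manhattan (x,y) t)"
    unfolding D_def by (simp add: sum_subtractf)
  also have "\<dots> = (\<Sum>t\<in>S. 1 - 2 * (if snd t \<le> y - 1 then 1 else 0))"
    by (rule sum.cong) (auto simp: manhattan_def)
  also have "\<dots> = int n - 2 * int (card {t\<in>S. snd t \<le> y - 1})"
    using fin cS by (simp add: sum_subtractf sum_distrib_left[symmetric] sum_ind)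
  finally have d: "D S (x,y-1) - D S (x,y) = int n - 2 * int (card {t\<in>S. snd t \<le> y - 1})" .
  have "card {t\<in>S. snd t \<le> \<kappa>} \<le> card {t\<in>S. snd t \<le> y - 1}"
    by (rule card_mono) (use fin yk in auto)
  thus False using d e m1 kap by linarith
qed

lemma down:
  assumes opt: "optimal_town n S" and kap: "int n \<le> 2 * int (card {t\<in>S. snd t \<le> \<kappa>})"
  shows "(x, \<kappa> + int k) \<in> S \<Longrightarrow> (x, \<kappa>) \<in> S"
proof (induction k)
  case 0 then show ?case by simp
next
  case (Suc k)
  have "(x, \<kappa> + int (Suc k) - 1) \<in> S" by (rule nest[OF opt kap Suc.prems]) simp
  thus ?case using Suc.IH by simp
qed


lemma G_bound_lemma:
  assumes opt: "optimal_town n S" and kap: "int n \<le> 2 * int (card {t\<in>S. snd t \<le> \<kappa>})"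
    and top: "\<And>t. t \<in> S \<Longrightarrow> snd t \<le> \<kappa> + int Tn"
  shows "4 * (\<Sum>t\<in>{t\<in>S. snd t > \<kappa>}. snd t - \<kappa>) \<le> (int Tn + 1) * int n"
proof -
  have fin: "finite S" and cS: "card S = n" using opt unfolding optimal_town_def is_town_def by auto
  define Sp where "Sp = {t\<in>S. snd t > \<kappa>}"
  have fSp: "finite Sp" using fin Sp_def by auto
  define g where "g t = nat (snd t - \<kappa>)" for t :: point
  define r where "r i = card {t\<in>S. snd t = \<kappa> + int i}" for i
  have gS: "g ` Sp \<subseteq> {1..Tn}" using top unfolding g_def Sp_def by force
  have fib: "{x. x \<in> Sp \<and> g x = i} = {t\<in>S. snd t = \<kappa> + int i}" if "i \<in> {1..Tn}" for i
    using that unfolding Sp_def g_def by auto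
  have "(\<Sum>t\<in>Sp. snd t - \<kappa>) = (\<Sum>i\<in>{1..Tn}. \<Sum>t\<in>{x. x \<in> Sp \<and> g x = i}. snd t - \<kappa>)"
    by (rule sum.group[OF fSp _ gS, symmetric]) simp
  also have "\<dots> = (\<Sum>i\<in>{1..Tn}. int (i * r i))"
  proof (rule sum.cong[OF refl])
    fix i assume i: "i \<in> {1..Tn}"
    have "(\<Sum>t\<in>{x. x \<in> Sp \<and> g x = i}. snd t - \<kappa>) = (\<Sum>t\<in>{t\<in>S. snd t = \<kappa> + int i}. int i)"
      unfolding fib[OF i] by (rule sum.cong) auto
    thus "(\<Sum>t\<in>{x. x \<in> Sp \<and> g x = i}. snd t - \<kappa>) = int (i * r i)" by (simp add: r_def)
  qed
  finally have G: "(\<Sum>t\<in>Sp. snd t - \<kappa>) = int (\<Sum>i=1..Tn. i * r i)" by simp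
  have "card Sp = (\<Sum>t\<in>Sp. (1::nat))" by simp
  also have "\<dots> = (\<Sum>i\<in>{1..Tn}. \<Sum>t\<in>{x. x \<in> Sp \<and> g x = i}. (1::nat))"
    by (rule sum.group[OF fSp _ gS, symmetric]) simp
  also have "\<dots> = (\<Sum>i\<in>{1..Tn}. r i)"
    by (rule sum.cong[OF refl]) (simp add: fib r_def)
  finally have cSp: "card Sp = (\<Sum>i=1..Tn. r i)" .
  have step1: "r (Suc i) \<le> r i" if "1 \<le> i" for i
  proof -
    have "card {t\<in>S. snd t = \<kappa> + int (Suc i)} \<le> card {t\<in>S. snd t = \<kappa> + int i}"
    proof (rule card_inj_on_le[where f = "\<lambda>(x,y). (x, y - 1)"])
      show "inj_on (\<lambda>(x,y). (x, y - 1)) {t\<in>S. snd t = \<kappa> + int (Suc i)}"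
        by (auto simp: inj_on_def)
      show "(\<lambda>(x,y). (x, y - 1)) ` {t\<in>S. snd t = \<kappa> + int (Suc i)} \<subseteq> {t\<in>S. snd t = \<kappa> + int i}"
      proof
        fix z assume "z \<in> (\<lambda>(x,y). (x, y - 1)) ` {t\<in>S. snd t = \<kappa> + int (Suc i)}"
        then obtain x y where xy: "(x,y) \<in> S" "y = \<kappa> + int (Suc i)" and z: "z = (x, y - 1)" by auto
        have "(x, y - 1) \<in> S" by (rule nest[OF opt kap xy(1)]) (use xy that in simp)
        thus "z \<in> {t\<in>S. snd t = \<kappa> + int i}" using z xy by simp
      qed
      show "finite {t\<in>S. snd t = \<kappa> + int i}" using fin by simp
    qed
    thus ?thesis by (simp add: r_def)
  qed
  have mono: "r j \<le> r i" if "1 \<le> i" "i \<le> j" for i j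
    using that(2,1)
  proof (induction j rule: dec_induct)
    case base then show ?case by simp
  next
    case (step k) then show ?case using step1[of k] by simp
  qed
  have ch: "2 * (\<Sum>i=1..Tn. i * r i) \<le> (Tn+1) * (\<Sum>i=1..Tn. r i)"
    by (rule cheb) (rule mono)
  have part: "card Sp + card {t\<in>S. snd t \<le> \<kappa>} = n"
  proof -
    have "Sp \<union> {t\<in>S. snd t \<le> \<kappa>} = S" "Sp \<inter> {t\<in>S. snd t \<le> \<kappa>} = {}" unfolding Sp_def by auto
    thus ?thesis using card_Un_disjoint[of Sp "{t\<in>S. snd t \<le> \<kappa>}"] fin cS fSp by auto
  qed
  have "int (2 * (\<Sum>i=1..Tn. i * r i)) \<le> int ((Tn+1) * (\<Sum>i=1..Tn. r i))" using ch by linarith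
  hence "2 * (\<Sum>t\<in>Sp. snd t - \<kappa>) \<le> (int Tn + 1) * int (card Sp)" using G cSp by (simp add: algebra_simps)
  moreover have "(int Tn + 1) * (2 * int (card Sp)) \<le> (int Tn + 1) * int n"
    by (rule mult_left_mono) (use part kap in auto)
  ultimately show ?thesis unfolding Sp_def by (simp add: algebra_simps)
qed


lemma core:
  assumes opt: "optimal_town n S" and n1: "n \<ge> 1" and rows: "\<And>i. card (row S i) \<le> w"
    and kap: "int n \<le> 2 * int (card {t\<in>S. snd t \<le> \<kappa>})" and pS: "p \<in> S"
  shows "snd p - \<kappa> \<le> int w + 1"
proof (rule ccontr)
  assume big: "\<not> snd p - \<kappa> \<le> int w + 1"
  have fin: "finite S" and cS: "card S = n" using opt unfolding optimal_town_def is_town_def by auto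
  define Yt where "Yt = Max (snd ` S)"
  have Yt_in: "Yt \<in> snd ` S" unfolding Yt_def using fin pS by (intro Max_in) auto
  then obtain xt where pt: "(xt, Yt) \<in> S" by auto
  have Yt_ge: "\<And>t. t \<in> S \<Longrightarrow> snd t \<le> Yt" unfolding Yt_def using fin by auto
  define T where "T = Yt - \<kappa>"
  have T_big: "T \<ge> int w + 2" using Yt_ge[OF pS] big T_def by linarith
  have ck: "(xt, \<kappa>) \<in> S"
    using down[OF opt kap, of xt "nat T"] pt T_big T_def by simp
  define m where "m = (int w + 1) div 2"
  have m1: "2 * m \<le> int w + 1" and m2: "int w < 2 * m + 1" unfolding m_def by auto
  obtain xq where xq: "\<bar>xq - xt\<bar> \<le> m" and nq: "(xq, \<kappa>) \<notin> S"
  proof -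
    have "\<exists>xq \<in> {xt - m..xt + m}. (xq, \<kappa>) \<notin> S"
    proof (rule ccontr)
      assume "\<not> ?thesis"
      hence sub: "(\<lambda>z. (z, \<kappa>)) ` {xt - m..xt + m} \<subseteq> row S \<kappa>" unfolding row_def by auto
      have "card ((\<lambda>z. (z, \<kappa>)) ` {xt - m..xt + m}) \<le> card (row S \<kappa>)"
        by (rule card_mono[OF _ sub]) (use fin in \<open>simp add: row_def\<close>)
      moreover have "card ((\<lambda>z. (z, \<kappa>)) ` {xt - m..xt + m}) = nat (2*m + 1)"
        by (subst card_image) (auto simp: inj_on_def)
      ultimately show False using rows[of \<kappa>] m2 by linarith
    qed
    then obtain z where z: "z \<in> {xt - m..xt + m}" "(z, \<kappa>) \<notin> S" by blast
    show ?thesis by (rule that[of z]) (use z in \<open>auto simp: abs_le_iff\<close>)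
  qed
  define d where "d = \<bar>xq - xt\<bar>"
  have e: "D S (xt, Yt) + manhattan (xt, Yt) (xq, \<kappa>) \<le> D S (xq, \<kappa>)" by (rule exch[OF opt pt nq])
  have mpq: "manhattan (xt, Yt) (xq, \<kappa>) = d + T"
    unfolding manhattan_def d_def T_def using T_big T_def by auto
  define Sp where "Sp = {t\<in>S. snd t > \<kappa>}"
  define G where "G = (\<Sum>t\<in>Sp. snd t - \<kappa>)"
  have "D S (xq, \<kappa>) - D S (xt, Yt) = (\<Sum>t\<in>S. manhattan (xq,\<kappa>) t - manhattan (xt,Yt) t)"
    unfolding D_def by (simp add: sum_subtractf)
  also have "\<dots> \<le> (\<Sum>t\<in>S. d + (2 * (if snd t > \<kappa> then snd t - \<kappa> else 0) - T))"
  proof (rule sum_mono)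
    fix t assume "t \<in> S"
    hence "snd t \<le> Yt" by (rule Yt_ge)
    thus "manhattan (xq,\<kappa>) t - manhattan (xt,Yt) t \<le> d + (2 * (if snd t > \<kappa> then snd t - \<kappa> else 0) - T)"
      unfolding manhattan_def d_def T_def by auto
  qed
  also have "\<dots> = (\<Sum>t\<in>S. d) + 2 * (\<Sum>t\<in>S. (if snd t > \<kappa> then snd t - \<kappa> else 0)) - (\<Sum>t\<in>S. T)"
    by (simp add: sum.distrib sum_subtractf sum_distrib_left)
  also have "\<dots> = int n * d + 2 * G - int n * T"
    using fin cS by (simp add: G_def Sp_def sum.inter_filter)
  finally have main: "d + T \<le> int n * d + 2 * G - int n * T" using e mpq by linarith
  have G_bound: "4 * G \<le> (T + 1) * int n"
    using G_bound_lemma[OF opt kap, of "nat T"] Yt_ge T_def T_big unfolding G_def Sp_def by simp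
  have dm: "2 * d + 1 - T \<le> 0" using xq d_def m1 T_big by linarith
  have "int n * (2 * d + 1 - T) \<le> 0" by (rule mult_nonneg_nonpos) (use dm in auto)
  moreover have "int n * (2 * d + 1 - T) = 2 * (int n * d) - 2 * (int n * T) + (T + 1) * int n"
    by (simp add: algebra_simps)
  ultimately show False using main G_bound T_big d_def by linarith
qed


lemma iso_opt:
  assumes inv: "\<And>p. f (f p) = p" and iso: "\<And>p q. manhattan (f p) (f q) = manhattan p q"
    and opt: "optimal_town n S"
  shows "optimal_town n (f ` S)"
proof -
  have inj: "inj_on f A" for A by (metis inj_on_def inv)
  have cst: "cost (f ` A) = cost A" for A
    unfolding cost_def by (simp add: sum.reindex[OF inj] iso)
  have town: "is_town n (f ` A) \<longleftrightarrow> is_town n A" for A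
    unfolding is_town_def using finite_image_iff[OF inj] card_image[OF inj] by simp
  show ?thesis unfolding optimal_town_def
  proof (intro conjI allI impI)
    show "is_town n (f ` S)" using opt town unfolding optimal_town_def by simp
    fix T assume "is_town n T"
    hence "is_town n (f ` T)" using town by simp
    hence "cost S \<le> cost (f ` T)" using opt unfolding optimal_town_def by simp
    thus "cost (f ` S) \<le> cost T" using cst by simp
  qed
qed

lemma median:
  fixes S :: "point set"
  assumes fin: "finite S" and cS: "card S = n" and n1: "n \<ge> 1"
  shows "\<exists>\<kappa>. int n \<le> 2 * int (card {t\<in>S. snd t \<le> \<kappa>}) \<and> int n \<le> 2 * int (card {t\<in>S. snd t \<ge> \<kappa>})"
proof -
  define P where "P y = (int n \<le> 2 * int (card {t\<in>S. snd t \<le> y}))" for y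
  have ne: "S \<noteq> {}" using cS n1 by auto
  define Yt where "Yt = Max (snd ` S)"
  define Yb where "Yb = Min (snd ` S)"
  have t: "\<And>t. t \<in> S \<Longrightarrow> snd t \<le> Yt" "\<And>t. t \<in> S \<Longrightarrow> Yb \<le> snd t"
    unfolding Yt_def Yb_def using fin by auto
  have bt: "Yb \<le> Yt" using t ne by fastforce
  have PYt: "P Yt"
  proof -
    have "{t\<in>S. snd t \<le> Yt} = S" using t(1) by auto
    thus ?thesis unfolding P_def using cS by simp
  qed
  have nPb: "\<not> P (Yb - 1)" 
  proof -
    have "{t\<in>S. snd t \<le> Yb - 1} = {}" using t(2) by force
    hence e: "card {t\<in>S. snd t \<le> Yb - 1} = 0" by (metis card.empty)
    show ?thesis unfolding P_def using n1 e by linarith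
  qed
  have "P ((Yb - 1) + int (nat (Yt - Yb + 1)))" using PYt bt by simp
  then obtain y where y: "P y" "\<not> P (y - 1)" using discrete_ivt[of P] nPb by blast
  have "card {t\<in>S. snd t \<ge> y} + card {t\<in>S. snd t \<le> y - 1} = n"
  proof -
    have "{t\<in>S. snd t \<ge> y} \<union> {t\<in>S. snd t \<le> y - 1} = S" "{t\<in>S. snd t \<ge> y} \<inter> {t\<in>S. snd t \<le> y - 1} = {}" by auto
    thus ?thesis using card_Un_disjoint[of "{t\<in>S. snd t \<ge> y}" "{t\<in>S. snd t \<le> y - 1}"] fin cS by auto
  qed
  thus ?thesis using y unfolding P_def by (intro exI[of _ y]) linarith
qed


lemma rows_le_width:
  assumes fin: "finite S" shows "card (row S i) \<le> width S"
proof -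
  have "range (\<lambda>i. card (row S i)) \<subseteq> {0..card S}"
    using fin by (auto simp: row_def intro!: card_mono)
  hence "finite (range (\<lambda>i. card (row S i)))" using finite_subset by blast
  thus ?thesis unfolding width_def by (intro Max_ge) auto
qed

lemma height_attained:
  assumes fin: "finite S" shows "\<exists>a. card (col S a) = height S"
proof -
  have "range (\<lambda>i. card (col S i)) \<subseteq> {0..card S}"
    using fin by (auto simp: col_def intro!: card_mono)
  hence "finite (range (\<lambda>i. card (col S i)))" using finite_subset by blast
  hence "height S \<in> range (\<lambda>i. card (col S i))" unfolding height_def by (intro Max_in) auto
  thus ?thesis by auto
qed

definition refl_y :: "point \<Rightarrow> point" where "refl_y p = (fst p, - snd p)"

lemma M:
  assumes opt: "optimal_town n S" and n1: "n \<ge> 1"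
  shows "int (height S) \<le> 2 * int (width S) + 3"
proof -
  have fin: "finite S" and cS: "card S = n" using opt unfolding optimal_town_def is_town_def by auto
  obtain a where ha: "card (col S a) = height S" using height_attained[OF fin] by blast
  show ?thesis
  proof (cases "height S = 0")
    case True then show ?thesis by simp
  next
    case False
    define C where "C = col S a"
    have fC: "finite C" using fin C_def col_def by simp
    have neC: "C \<noteq> {}" using False ha C_def by auto
    define b where "b = Min (snd ` C)"
    define t where "t = Max (snd ` C)"
    have "b \<in> snd ` C" unfolding b_def using fC neC by (intro Min_in) auto
    then obtain pb where pb: "pb \<in> C" "snd pb = b" by auto
    have bS: "(a, b) \<in> S" using pb unfolding C_def col_def by (cases pb) auto
    have "t \<in> snd ` C" unfolding t_def using fC neC by (intro Max_in) auto
    then obtain pt where pt: "pt \<in> C" "snd pt = t" by auto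
    have tS: "(a, t) \<in> S" using pt unfolding C_def col_def by (cases pt) auto
    have injC: "inj_on snd C" unfolding C_def col_def inj_on_def by (auto simp: prod_eq_iff)
    have "snd ` C \<subseteq> {b..t}"
    proof
      fix y assume y: "y \<in> snd ` C"
      have "b \<le> y" unfolding b_def using fC y by (intro Min_le) auto
      moreover have "y \<le> t" unfolding t_def using fC y by (intro Max_ge) auto
      ultimately show "y \<in> {b..t}" by simp
    qed
    hence "card (snd ` C) \<le> card {b..t}" by (intro card_mono) auto
    hence hb0: "height S \<le> nat (t - b + 1)" using ha card_image[OF injC] C_def by simp
    hence "0 < nat (t - b + 1)" using False by linarith
    hence "t - b + 1 \<ge> 0" by simp
    hence hb: "int (height S) \<le> t - b + 1" using hb0 by (simp add: le_nat_iff)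
    obtain \<kappa> where k1: "int n \<le> 2 * int (card {t\<in>S. snd t \<le> \<kappa>})"
      and k2: "int n \<le> 2 * int (card {t\<in>S. snd t \<ge> \<kappa>})" using median[OF fin cS n1] by blast
    have c1: "t - \<kappa> \<le> int (width S) + 1"
      using core[OF opt n1 rows_le_width[OF fin] k1 tS] by simp
    define S' where "S' = refl_y ` S"
    have inv: "refl_y (refl_y p) = p" for p by (simp add: refl_y_def)
    have iso: "manhattan (refl_y p) (refl_y q) = manhattan p q" for p q
      by (simp add: refl_y_def manhattan_def abs_minus_commute)
    have injr: "inj_on refl_y A" for A by (metis inj_on_def inv)
    have opt': "optimal_town n S'" unfolding S'_def by (rule iso_opt[OF inv iso opt])
    have rows': "card (row S' i) \<le> width S" for i
    proof -
      have "row S' i = refl_y ` row S (- i)" unfolding S'_def row_def refl_y_def by force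
      hence "card (row S' i) = card (row S (- i))" using card_image[OF injr] by simp
      thus ?thesis using rows_le_width[OF fin] by simp
    qed
    have k1': "int n \<le> 2 * int (card {t\<in>S'. snd t \<le> - \<kappa>})"
    proof -
      have "{t\<in>S'. snd t \<le> - \<kappa>} = refl_y ` {t\<in>S. snd t \<ge> \<kappa>}" unfolding S'_def refl_y_def by force
      hence "card {t\<in>S'. snd t \<le> - \<kappa>} = card {t\<in>S. snd t \<ge> \<kappa>}" using card_image[OF injr] by simp
      thus ?thesis using k2 by simp
    qed
    have bS': "(a, - b) \<in> S'" unfolding S'_def using bS by (force simp: refl_y_def)
    have c2: "- b - (- \<kappa>) \<le> int (width S) + 1"
      using core[OF opt' n1 rows' k1' bS'] by simp
    show ?thesis using hb c1 c2 by linarith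
  qed
qed

lemma swap_dims:
  "height (prod.swap ` S) = width S" "width (prod.swap ` S) = height S"
proof -
  have "col (prod.swap ` S) i = prod.swap ` row S i" for i unfolding col_def row_def by force
  hence "card (col (prod.swap ` S) i) = card (row S i)" for i by (simp add: card_image)
  thus "height (prod.swap ` S) = width S" unfolding height_def width_def by simp
  have "row (prod.swap ` S) i = prod.swap ` col S i" for i unfolding col_def row_def by force
  hence "card (row (prod.swap ` S) i) = card (col S i)" for i by (simp add: card_image)
  thus "width (prod.swap ` S) = height S" unfolding height_def width_def by simp
qed

theorem lemma4:
  fixes n :: nat and S :: "point set"
  assumes "n \<ge> 1" and "optimal_town n S"
  shows "real (width S) > real (height S) / 2 - 3 \<and> real (height S) > real (width S) / 2 - 3"
proof -
  have a: "int (height S) \<le> 2 * int (width S) + 3" by (rule M[OF assms(2,1)])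
  have opt': "optimal_town n (prod.swap ` S)"
    by (rule iso_opt[OF _ _ assms(2)]) (auto simp: manhattan_def)
  have b: "int (width S) \<le> 2 * int (height S) + 3"
    using M[OF opt' assms(1)] swap_dims by simp
  have a': "real (height S) \<le> 2 * real (width S) + 3" using a by linarith
  have b': "real (width S) \<le> 2 * real (height S) + 3" using b by linarith
  show ?thesis using a' b' by linarith
qed

end
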